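(* Let $N\ge2$, $0=t_0<t_1<\dots<t_N=1$, $\delta_i:=t_i-t_{i-1}$, and assume $\alpha\delta\le\delta_i\le\delta$ for each $i\in\{1,\dots,N\}$, where $\alpha,\delta>0$. Let $\mathbf T$ be the $(N-1)\times(N-1)$ symmetric tridiagonal matrix with diagonal entries $\mathbf T_{i,i}=2(\delta_i+\delta_{i+1})$ and off-diagonal entries $\mathbf T_{i,i+1}=\mathbf T_{i+1,i}=\delta_{i+1}$. Then $\mathbf T$ is invertible and for all $i,j\in\{1,\dots,N-1\}$, $$|(\mathbf T^{-1})_{i,j}|\le\frac{1}{4\alpha^2(1+\alpha)^{|i-j|-1}}\,\frac1\delta.$$ *)

theory Defs
  imports Complex_Main "Jordan_Normal_Form.Matrix"
begin

text \<open>The (N-1)x(N-1) tridiagonal matrix T of the paper, with 0-based indices: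
  paper row i (1-based) is row i-1 here.\<close>

definition tri_T :: "nat \<Rightarrow> (nat \<Rightarrow> real) \<Rightarrow> real mat" where
  "tri_T N t = mat (N - 1) (N - 1) (\<lambda>(i, j).
     (let d = (\<lambda>k. t k - t (k - 1)) in
      if i = j then 2 * (d (i + 1) + d (i + 2))
      else if j = i + 1 then d (i + 2)
      else if i = j + 1 then d (j + 2)
      else 0))"

end

theory Submission
  imports Defs "Jordan_Normal_Form.Determinant"
begin

lemma max_bound:
  fixes f D r :: "nat \<Rightarrow> real" and a R :: real
  assumes n: "0 < n" and fnn: "\<And>i. i < n \<Longrightarrow> 0 \<le> f i"
    and a: "0 < a" and Dge: "\<And>k. k \<le> n \<Longrightarrow> a \<le> D k"
    and rows: "\<And>i. i < n \<Longrightarrow> 2 * (D i + D (Suc i)) * f i \<le>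
      (if 0 < i then D i * f (i - 1) else 0) + (if Suc i < n then D (Suc i) * f (Suc i) else 0) + r i"
    and rR: "\<And>i. i < n \<Longrightarrow> r i \<le> R"
  shows "\<And>i. i < n \<Longrightarrow> f i \<le> R / (2 * a)"
proof -
  define M where "M = Max (f ` {..<n})"
  have fin: "finite (f ` {..<n})" and ne: "f ` {..<n} \<noteq> {}" using n by auto
  have le: "f i \<le> M" if "i < n" for i unfolding M_def using fin that by auto
  obtain k where k: "k < n" "f k = M" using Max_in[OF fin ne] unfolding M_def by auto
  have M0: "0 \<le> M" using fnn k by auto
  have Dk: "a \<le> D k" "a \<le> D (Suc k)" using Dge k by auto
  have A: "(if 0 < k then D k * f (k - 1) else 0) \<le> D k * M"
    using le[of "k-1"] k Dk a M0 by (auto intro: mult_left_mono)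
  have B: "(if Suc k < n then D (Suc k) * f (Suc k) else 0) \<le> D (Suc k) * M"
    using le[of "Suc k"] k Dk a M0 by (auto intro: mult_left_mono)
  have "2 * (D k + D (Suc k)) * M \<le> D k * M + D (Suc k) * M + R"
  proof -
    have "2 * (D k + D (Suc k)) * M \<le>
      (if 0 < k then D k * f (k - 1) else 0) + (if Suc k < n then D (Suc k) * f (Suc k) else 0) + r k"
      using rows[OF k(1)] unfolding k(2) .
    thus ?thesis using A B rR[OF k(1)] by linarith
  qed
  hence "(D k + D (Suc k)) * M \<le> R" by (simp add: algebra_simps)
  moreover have "2 * a * M \<le> (D k + D (Suc k)) * M" using Dk M0 by (intro mult_right_mono) auto
  ultimately have "M \<le> R / (2 * a)" using a by (simp add: pos_le_divide_eq mult.commute)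
  thus "\<And>i. i < n \<Longrightarrow> f i \<le> R / (2 * a)" using le by (meson order_trans)
qed


lemma decay_right:
  fixes f D r :: "nat \<Rightarrow> real" and \<alpha> \<delta> M :: real
  assumes j: "j < n" and fnn: "\<And>i. i < n \<Longrightarrow> 0 \<le> f i"
    and a: "0 < \<alpha>" "0 < \<delta>" and Db: "\<And>k. k \<le> n \<Longrightarrow> \<alpha> * \<delta> \<le> D k \<and> D k \<le> \<delta>"
    and rows: "\<And>i. i < n \<Longrightarrow> 2 * (D i + D (Suc i)) * f i \<le>
      (if 0 < i then D i * f (i - 1) else 0) + (if Suc i < n then D (Suc i) * f (Suc i) else 0) + r i"
    and r0: "\<And>i. i < n \<Longrightarrow> i \<noteq> j \<Longrightarrow> r i \<le> 0"
    and fM: "\<And>i. i < n \<Longrightarrow> f i \<le> M"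
  shows "j + m \<le> i \<Longrightarrow> i < n \<Longrightarrow> f i \<le> M / (1 + \<alpha>) ^ m"
proof (induction m arbitrary: i)
  case 0
  then show ?case using fM by simp
next
  case (Suc m)
  define P where "P = M / (1 + \<alpha>) ^ m"
  define S where "S = {j + Suc m..<n}"
  have fin: "finite (f ` S)" and ne: "f ` S \<noteq> {}" using Suc.prems unfolding S_def by auto
  obtain k where k: "k \<in> S" "f k = Max (f ` S)" using Max_in[OF fin ne] by auto
  have le: "f i' \<le> f k" if "i' \<in> S" for i' using fin that k by auto
  have kn: "k < n" "j < k" "0 < k" using k unfolding S_def by auto
  have IH: "f (k - 1) \<le> P" using Suc.IH[of "k - 1"] kn k unfolding S_def P_def by auto
  have Dk: "\<alpha> * \<delta> \<le> D k" "D k \<le> \<delta>" "\<alpha> * \<delta> \<le> D (Suc k)" "D (Suc k) \<le> \<delta>" using Db kn by auto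
  have Dpos: "0 < D k" "0 < D (Suc k)" using Dk a by (auto intro: less_le_trans[OF mult_pos_pos])
  have fk0: "0 \<le> f k" using fnn kn by auto
  have A: "(if 0 < k then D k * f (k - 1) else 0) \<le> D k * P"
    using IH kn Dpos by (auto intro: mult_left_mono)
  have B: "(if Suc k < n then D (Suc k) * f (Suc k) else 0) \<le> D (Suc k) * f k"
    using le[of "Suc k"] kn k Dpos fk0 unfolding S_def by (auto intro: mult_left_mono)
  have "2 * (D k + D (Suc k)) * f k \<le> D k * P + D (Suc k) * f k"
    using rows[OF kn(1)] A B r0[of k] kn by linarith
  hence C: "(2 * D k + D (Suc k)) * f k \<le> D k * P" by (simp add: algebra_simps)
  have "\<alpha> * D k \<le> \<alpha> * \<delta>" using Dk a by simp
  hence "(1 + \<alpha>) * D k \<le> 2 * D k + D (Suc k)" using Dk Dpos by (simp add: algebra_simps)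
  hence "(1 + \<alpha>) * D k * f k \<le> (2 * D k + D (Suc k)) * f k" using fk0 by (intro mult_right_mono)
  with C have "D k * ((1 + \<alpha>) * f k) \<le> D k * P" by (simp add: algebra_simps)
  hence "(1 + \<alpha>) * f k \<le> P" using Dpos by simp
  hence "(1 + \<alpha>) * f k * (1 + \<alpha>) ^ m \<le> M" using a unfolding P_def by (simp add: pos_le_divide_eq)
  hence "f k * (1 + \<alpha>) ^ Suc m \<le> M" by (simp add: algebra_simps)
  hence fkb: "f k \<le> M / (1 + \<alpha>) ^ Suc m" using a by (simp add: pos_le_divide_eq)
  have "i \<in> S" using Suc.prems unfolding S_def by auto
  then show ?case using le fkb by force
qed

lemma decay_left:
  fixes f D r :: "nat \<Rightarrow> real" and \<alpha> \<delta> M :: real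
  assumes j: "j < n" and fnn: "\<And>i. i < n \<Longrightarrow> 0 \<le> f i"
    and a: "0 < \<alpha>" "0 < \<delta>" and Db: "\<And>k. k \<le> n \<Longrightarrow> \<alpha> * \<delta> \<le> D k \<and> D k \<le> \<delta>"
    and rows: "\<And>i. i < n \<Longrightarrow> 2 * (D i + D (Suc i)) * f i \<le>
      (if 0 < i then D i * f (i - 1) else 0) + (if Suc i < n then D (Suc i) * f (Suc i) else 0) + r i"
    and r0: "\<And>i. i < n \<Longrightarrow> i \<noteq> j \<Longrightarrow> r i \<le> 0"
    and fM: "\<And>i. i < n \<Longrightarrow> f i \<le> M"
  shows "i + m \<le> j \<Longrightarrow> f i \<le> M / (1 + \<alpha>) ^ m"
proof (induction m arbitrary: i)
  case 0
  then show ?case using fM j by simp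
next
  case (Suc m)
  define P where "P = M / (1 + \<alpha>) ^ m"
  define S where "S = {..<j - m}"
  have fin: "finite (f ` S)" using Suc.prems unfolding S_def by auto
  have "i \<in> S" using Suc.prems unfolding S_def by auto
  hence ne: "f ` S \<noteq> {}" by auto
  obtain k where k: "k \<in> S" "f k = Max (f ` S)" using Max_in[OF fin ne] by auto
  have le: "f i' \<le> f k" if "i' \<in> S" for i' using fin that k by auto
  have kn: "k < n" "k < j" "Suc k < n" using k j unfolding S_def by auto
  have IH: "f (Suc k) \<le> P" using Suc.IH[of "Suc k"] kn k unfolding S_def P_def by auto
  have Dk: "\<alpha> * \<delta> \<le> D k" "D k \<le> \<delta>" "\<alpha> * \<delta> \<le> D (Suc k)" "D (Suc k) \<le> \<delta>" using Db kn by auto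
  have Dpos: "0 < D k" "0 < D (Suc k)" using Dk a by (auto intro: less_le_trans[OF mult_pos_pos])
  have fk0: "0 \<le> f k" using fnn kn by auto
  have A: "(if Suc k < n then D (Suc k) * f (Suc k) else 0) \<le> D (Suc k) * P"
    using IH kn Dpos by (auto intro: mult_left_mono)
  have B: "(if 0 < k then D k * f (k - 1) else 0) \<le> D k * f k"
    using le[of "k - 1"] kn k Dpos fk0 unfolding S_def by (auto intro: mult_left_mono)
  have "2 * (D k + D (Suc k)) * f k \<le> D (Suc k) * P + D k * f k"
    using rows[OF kn(1)] A B r0[of k] kn by linarith
  hence C: "(D k + 2 * D (Suc k)) * f k \<le> D (Suc k) * P" by (simp add: algebra_simps)
  have "\<alpha> * D (Suc k) \<le> \<alpha> * \<delta>" using Dk a by simp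
  hence "(1 + \<alpha>) * D (Suc k) \<le> D k + 2 * D (Suc k)" using Dk Dpos by (simp add: algebra_simps)
  hence "(1 + \<alpha>) * D (Suc k) * f k \<le> (D k + 2 * D (Suc k)) * f k" using fk0 by (intro mult_right_mono)
  with C have "D (Suc k) * ((1 + \<alpha>) * f k) \<le> D (Suc k) * P" by (simp add: algebra_simps)
  hence "(1 + \<alpha>) * f k \<le> P" using Dpos by simp
  hence "(1 + \<alpha>) * f k * (1 + \<alpha>) ^ m \<le> M" using a unfolding P_def by (simp add: pos_le_divide_eq)
  hence "f k * (1 + \<alpha>) ^ Suc m \<le> M" by (simp add: algebra_simps)
  hence fkb: "f k \<le> M / (1 + \<alpha>) ^ Suc m" using a by (simp add: pos_le_divide_eq)
  have "i \<in> S" using Suc.prems unfolding S_def by auto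
  then show ?case using le fkb by force
qed


lemma tri_entry: "i < N - 1 \<Longrightarrow> k < N - 1 \<Longrightarrow> tri_T N t $$ (i, k) = 
  (if k = i then 2 * ((t (Suc i) - t i) + (t (Suc (Suc i)) - t (Suc i))) else 0)
    + (if k = Suc i then (t (Suc (Suc i)) - t (Suc i)) else 0)
    + (if 0 < i then (if k = i - 1 then (t (Suc i) - t i) else 0) else 0)"
  unfolding tri_T_def Let_def
  by (cases "k = i"; cases "k = Suc i"; cases "Suc k = i"; auto simp add: index_mat)

lemma tri_row:
  fixes t y :: "nat \<Rightarrow> real"
  assumes i: "i < N - 1"
  shows "(\<Sum>k\<in>{0..<N - 1}. tri_T N t $$ (i, k) * y k) =
    (if 0 < i then (t (Suc i) - t i) * y (i - 1) else 0)
    + 2 * ((t (Suc i) - t i) + (t (Suc (Suc i)) - t (Suc i))) * y i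
    + (if Suc i < N - 1 then (t (Suc (Suc i)) - t (Suc i)) * y (Suc i) else 0)"
proof -
  have eq: "tri_T N t $$ (i, k) * y k =
      (if k = i then 2 * ((t (Suc i) - t i) + (t (Suc (Suc i)) - t (Suc i))) * y i else 0)
    + (if k = Suc i then (t (Suc (Suc i)) - t (Suc i)) * y (Suc i) else 0)
    + (if 0 < i then (if k = i - 1 then (t (Suc i) - t i) * y (i - 1) else 0) else 0)"
    if k: "k \<in> {0..<N - 1}" for k
    using i k by (cases "k = i"; cases "k = Suc i"; cases "Suc k = i"; auto simp: tri_entry)
  show ?thesis
    apply (subst sum.cong[OF refl eq], assumption)
    using i apply (simp add: sum.distrib)
    using i by auto
qed

lemma tri_row_bound:
  fixes t y r :: "nat \<Rightarrow> real"
  assumes i: "i < N - 1"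
    and D: "\<And>k. k \<le> N - 1 \<Longrightarrow> 0 \<le> t (Suc k) - t k"
    and eq: "(\<Sum>k\<in>{0..<N - 1}. tri_T N t $$ (i, k) * y k) = r i"
  shows "2 * ((t (Suc i) - t i) + (t (Suc (Suc i)) - t (Suc i))) * \<bar>y i\<bar> \<le>
      (if 0 < i then (t (Suc i) - t i) * \<bar>y (i - 1)\<bar> else 0) +
      (if Suc i < N - 1 then (t (Suc (Suc i)) - t (Suc i)) * \<bar>y (Suc i)\<bar> else 0) + \<bar>r i\<bar>"
proof -
  define a where "a = t (Suc i) - t i"
  define b where "b = t (Suc (Suc i)) - t (Suc i)"
  have a: "0 \<le> a" and b: "0 \<le> b" using D[of i] D[of "Suc i"] i unfolding a_def b_def by auto
  define L where "L = (if 0 < i then a * y (i - 1) else 0)"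
  define U where "U = (if Suc i < N - 1 then b * y (Suc i) else 0)"
  have e: "2 * (a + b) * y i = r i - L - U" using eq tri_row[OF i, of t y] unfolding L_def U_def a_def b_def by simp
  have "\<bar>L\<bar> \<le> (if 0 < i then a * \<bar>y (i - 1)\<bar> else 0)" unfolding L_def using a by (simp add: abs_mult)
  moreover have "\<bar>U\<bar> \<le> (if Suc i < N - 1 then b * \<bar>y (Suc i)\<bar> else 0)" unfolding U_def using b by (simp add: abs_mult)
  moreover have "2 * (a + b) * \<bar>y i\<bar> = \<bar>r i - L - U\<bar>"
  proof -
    have "2 * (a + b) * \<bar>y i\<bar> = \<bar>2 * (a + b) * y i\<bar>" using a b by (simp add: abs_mult)
    also have "\<dots> = \<bar>r i - L - U\<bar>" by (simp only: e)
    finally show ?thesis .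
  qed
  ultimately show ?thesis unfolding a_def[symmetric] b_def[symmetric] by linarith
qed


lemma final_arith:
  fixes \<alpha> \<delta> :: real and m :: nat
  assumes a: "0 < \<alpha>" "\<alpha> \<le> 1" "0 < \<delta>"
  shows "1 / (2 * (\<alpha> * \<delta>)) / (1 + \<alpha>) ^ m \<le> 1 / (4 * \<alpha>^2 * (1 + \<alpha>) powr (real m - 1)) * (1 / \<delta>)"
proof -
  define Q where "Q = (1 + \<alpha>) ^ m"
  have Q: "0 < Q" unfolding Q_def using a by simp
  have p: "(1 + \<alpha>) powr (real m - 1) = Q / (1 + \<alpha>)" unfolding Q_def using a
    by (simp add: powr_diff powr_realpow)
  have "1 / (2 * (\<alpha> * \<delta>)) / Q \<le> (1 + \<alpha>) / (4 * \<alpha>^2 * Q * \<delta>)"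
  proof -
    have "4 * \<alpha>^2 * Q * \<delta> \<le> (1 + \<alpha>) * (2 * (\<alpha> * \<delta>) * Q)"
    proof -
      have "2 * \<alpha> \<le> 1 + \<alpha>" using a by simp
      hence "(2 * \<alpha>) * (2 * \<alpha> * \<delta> * Q) \<le> (1 + \<alpha>) * (2 * \<alpha> * \<delta> * Q)"
        using a Q by (intro mult_right_mono) auto
      thus ?thesis by (simp add: power2_eq_square algebra_simps)
    qed
    thus ?thesis using a Q apply (simp add: divide_simps) by (metis mult.commute)
  qed
  also have "\<dots> = 1 / (4 * \<alpha>^2 * (1 + \<alpha>) powr (real m - 1)) * (1 / \<delta>)"
    unfolding p using a Q by (simp add: field_simps)
  finally show ?thesis unfolding Q_def .
qed

theorem lemma3:
  fixes N :: nat and t :: "nat \<Rightarrow> real" and \<alpha> \<delta> :: real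
  assumes "N \<ge> 2"
    and "t 0 = 0" and "t N = 1"
    and "\<And>i. i < N \<Longrightarrow> t i < t (i + 1)"
    and "\<alpha> > 0" and "\<delta> > 0"
    and "\<And>i. 1 \<le> i \<Longrightarrow> i \<le> N \<Longrightarrow> \<alpha> * \<delta> \<le> t i - t (i - 1) \<and> t i - t (i - 1) \<le> \<delta>"
  shows "invertible_mat (tri_T N t) \<and>
    (\<forall>B \<in> carrier_mat (N - 1) (N - 1). tri_T N t * B = 1\<^sub>m (N - 1) \<longrightarrow>
      (\<forall>i < N - 1. \<forall>j < N - 1.
         \<bar>B $$ (i, j)\<bar> \<le> 1 / (4 * \<alpha>^2 * (1 + \<alpha>) powr (\<bar>real i - real j\<bar> - 1)) * (1 / \<delta>)))"
proof -
  define n where "n = N - 1"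
  define D where "D = (\<lambda>k. t (Suc k) - t k)"
  have n0: "0 < n" using assms(1) unfolding n_def by simp
  have a: "0 < \<alpha>" "0 < \<delta>" using assms(5,6) by auto
  have Db: "\<alpha> * \<delta> \<le> D k \<and> D k \<le> \<delta>" if "k \<le> n" for k
    using assms(7)[of "Suc k"] that assms(1) unfolding n_def D_def by auto
  have ad: "0 < \<alpha> * \<delta>" using a by simp
  have Dnn: "0 \<le> t (Suc k) - t k" if "k \<le> N - 1" for k
  proof -
    have "\<alpha> * \<delta> \<le> D k" using Db[of k] that unfolding n_def by auto
    thus ?thesis using ad unfolding D_def by linarith
  qed
  have a1: "\<alpha> \<le> 1"
  proof -
    have "\<alpha> * \<delta> \<le> \<delta>" using Db[of 0] by linarith
    thus ?thesis using a by (simp add: mult_le_cancel_right2)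
  qed
  have Tc: "tri_T N t \<in> carrier_mat n n" unfolding tri_T_def n_def by simp
  have rowsum: "(tri_T N t *\<^sub>v v) $ i = (\<Sum>k\<in>{0..<N - 1}. tri_T N t $$ (i, k) * v $ k)"
    if "v \<in> carrier_vec n" "i < n" for v i
    using that Tc unfolding n_def by (auto simp: scalar_prod_def intro!: sum.cong)
  have rowsumB: "(tri_T N t * B) $$ (i, j) = (\<Sum>k\<in>{0..<N - 1}. tri_T N t $$ (i, k) * B $$ (k, j))"
    if "B \<in> carrier_mat n n" "i < n" "j < n" for B i j
    using that Tc unfolding n_def by (auto simp: scalar_prod_def intro!: sum.cong)
  have ker: "v = 0\<^sub>v n" if v: "v \<in> carrier_vec n" and Tv: "tri_T N t *\<^sub>v v = 0\<^sub>v n" for v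
  proof -
    have rows: "2 * (D i + D (Suc i)) * \<bar>v $ i\<bar> \<le>
      (if 0 < i then D i * \<bar>v $ (i - 1)\<bar> else 0) + (if Suc i < n then D (Suc i) * \<bar>v $ (Suc i)\<bar> else 0) + \<bar>0::real\<bar>"
      if "i < n" for i
      using tri_row_bound[of i N t "\<lambda>k. v $ k" "\<lambda>_. 0"] that Dnn rowsum[OF v that] Tv
      unfolding D_def n_def by auto
    have "\<And>i. i < n \<Longrightarrow> \<bar>v $ i\<bar> \<le> 0 / (2 * (\<alpha> * \<delta>))"
      by (rule max_bound[of n "\<lambda>i. \<bar>v $ i\<bar>" "\<alpha> * \<delta>" D "\<lambda>_. \<bar>0::real\<bar>" 0]) (use n0 ad Db rows in auto)
    thus ?thesis using v by (auto intro!: eq_vecI)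
  qed
  have "det (tri_T N t) \<noteq> 0"
    using ker det_0_iff_vec_prod_zero[OF Tc] by auto
  from det_non_zero_imp_unit[OF Tc this, of undefined]
  obtain B where B: "B \<in> carrier_mat n n" "B * tri_T N t = 1\<^sub>m n" "tri_T N t * B = 1\<^sub>m n"
    unfolding Units_def ring_mat_def by auto
  have inv: "invertible_mat (tri_T N t)"
    unfolding invertible_mat_def inverts_mat_def using B Tc by auto
  have bound: "\<bar>B $$ (i, j)\<bar> \<le> 1 / (4 * \<alpha>^2 * (1 + \<alpha>) powr (\<bar>real i - real j\<bar> - 1)) * (1 / \<delta>)"
    if B: "B \<in> carrier_mat n n" "tri_T N t * B = 1\<^sub>m n" and ij: "i < n" "j < n" for B i j
  proof -
    define f where "f = (\<lambda>k. \<bar>B $$ (k, j)\<bar>)"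
    define r where "r = (\<lambda>k. \<bar>(if k = j then 1 else 0) :: real\<bar>)"
    have rows: "2 * (D k + D (Suc k)) * f k \<le>
      (if 0 < k then D k * f (k - 1) else 0) + (if Suc k < n then D (Suc k) * f (Suc k) else 0) + r k"
      if "k < n" for k
    proof -
      have kN: "k < N - 1" using that unfolding n_def .
      have eqk: "(\<Sum>ka\<in>{0..<N - 1}. tri_T N t $$ (k, ka) * B $$ (ka, j)) = (if k = j then 1 else 0)"
        using rowsumB[OF B(1) that ij(2)] B(2) that ij unfolding n_def by simp
      from tri_row_bound[of k N t "\<lambda>k. B $$ (k, j)" "\<lambda>k. if k = j then 1 else 0", OF kN Dnn eqk]
      show ?thesis unfolding D_def f_def r_def n_def by simp
    qed
    have fnn: "\<And>k. k < n \<Longrightarrow> 0 \<le> f k" unfolding f_def by simp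
    have fM: "\<And>k. k < n \<Longrightarrow> f k \<le> 1 / (2 * (\<alpha> * \<delta>))"
      by (rule max_bound[of n f "\<alpha> * \<delta>" D r 1]) (use n0 ad Db rows fnn in \<open>auto simp: r_def\<close>)
    have r0: "\<And>k. k < n \<Longrightarrow> k \<noteq> j \<Longrightarrow> r k \<le> 0" unfolding r_def by simp
    define m where "m = nat \<bar>int i - int j\<bar>"
    have mr: "\<bar>real i - real j\<bar> = real m" unfolding m_def by auto
    have "f i \<le> 1 / (2 * (\<alpha> * \<delta>)) / (1 + \<alpha>) ^ m"
    proof (cases "j \<le> i")
      case True
      show ?thesis
        by (rule decay_right[OF ij(2) fnn a Db rows r0 fM]) (use True ij in \<open>auto simp: m_def\<close>)
    next
      case False
      show ?thesis
        by (rule decay_left[OF ij(2) fnn a Db rows r0 fM]) (use False ij in \<open>auto simp: m_def\<close>)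
    qed
    also have "\<dots> \<le> 1 / (4 * \<alpha>^2 * (1 + \<alpha>) powr (real m - 1)) * (1 / \<delta>)"
      by (rule final_arith[OF a(1) a1 a(2)])
    finally show ?thesis unfolding f_def mr .
  qed
  show ?thesis using inv bound unfolding n_def by blast
qed

end
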